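(* With notation as in the context, for every $\sigma\in\mathcal S_\ell$ and every choice of indices $r_1,\dots,r_\ell\in\{1,\dots,\ell\}$, $$\langle\alpha_{1r_1}\alpha_{2r_2}\cdots\alpha_{\ell r_\ell},\,z_\sigma\rangle=\begin{cases}\pm1,&\text{if } r_j=\sigma(j)\text{ for all }j,\\ 0,&\text{otherwise.}\end{cases}$$
   Context: $T$ is a finite tree with essential vertices (degree $\ge3$) $v_1,\dots,v_m$, and $1\le\ell\le m$. $\mathcal C^kX$ denotes the ordered configuration space $\{(x_1,\dots,x_k)\in X^k: x_i\neq x_j\ (i\ne j)\}$. For each $i$, $Y_i\subset T$ is a $Y$-graph (tree with one degree-$3$ vertex and three leaves) embedded in a small neighborhood of $v_i$, centered at $v_i$, with $Y_i\cap Y_j=\emptyset$ for $i\ne j$; $\mathcal C^2Y_i\simeq S^1$. Let $\alpha_i\in H^1(\mathcal C^2T;\mathbb Z)$ be classes whose restriction to $\mathcal C^2Y_j$ is $\delta_{ij}$ times a fixed generator $g_j$ of $H^1(\mathcal C^2Y_j)\cong\mathbb Z$. Define $\Psi:\prod_{j=1}^\ell\mathcal C^2Y_j\to\mathcal C^{2\ell}T$, $\Psi((x_1,x_2),\dots,(x_{2\ell-1},x_{2\ell}))=(x_1,\dots,x_{2\ell})$, and $\Phi_i:\mathcal C^{2\ell}T\to\mathcal C^2T$, $\Phi_i(x_1,\dots,x_{2\ell})=(x_{2i-1},x_{2i})$; set $\alpha_{ij}=\Phi_i^*(\alpha_j)\in H^1(\mathcal C^{2\ell}T)$ for $i,j\in\{1,\dots,\ell\}$.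 Let $t$ be the top homology class of the torus $\prod_{j=1}^\ell\mathcal C^2Y_j$ with $\langle \mathrm{pr}_1^*g_1\cdots\mathrm{pr}_\ell^*g_\ell,t\rangle=1$, and $z=\Psi_*(t)\in H_\ell(\mathcal C^{2\ell}T)$. For $\sigma\in\mathcal S_\ell$, $g_\sigma:\mathcal C^{2\ell}T\to\mathcal C^{2\ell}T$ is $g_\sigma(x_1,\dots,x_{2\ell})=(x_{2\sigma(1)-1},x_{2\sigma(1)},\dots,x_{2\sigma(\ell)-1},x_{2\sigma(\ell)})$, and $z_\sigma=(g_\sigma)_*(z)$. *)

theory Defs
  imports "HOL-Homology.Homology" "HOL-Combinatorics.Permutations"
begin

definition adj :: "'v set set \<Rightarrow> 'v \<Rightarrow> 'v \<Rightarrow> bool" where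
  "adj E u w \<longleftrightarrow> {u, w} \<in> E \<and> u \<noteq> w"

definition graph_connected :: "'v set \<Rightarrow> 'v set set \<Rightarrow> bool" where
  "graph_connected V E \<longleftrightarrow>
     (\<forall>u\<in>V. \<forall>w\<in>V. (u, w) \<in> {(a, b). adj E a b}\<^sup>*)"

definition graph_acyclic :: "'v set \<Rightarrow> 'v set set \<Rightarrow> bool" where
  "graph_acyclic V E \<longleftrightarrow>
     \<not> (\<exists>xs. length xs \<ge> 3 \<and> distinct xs \<and> set xs \<subseteq> V
            \<and> (\<forall>i < length xs - 1. adj E (xs ! i) (xs ! Suc i))
            \<and> adj E (last xs) (hd xs))"

definition vdegree :: "'v set set \<Rightarrow> 'v \<Rightarrow> nat" where
  "vdegree E v = card {e \<in> E. v \<in> e}"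

definition geometric_tree :: "'v set \<Rightarrow> 'v set set \<Rightarrow> ('v \<Rightarrow> 'e::euclidean_space) \<Rightarrow> bool" where
  "geometric_tree V E pos \<longleftrightarrow>
     finite V \<and> V \<noteq> {} \<and>
     (\<forall>e\<in>E. \<exists>u w. e = {u, w} \<and> u \<in> V \<and> w \<in> V \<and> u \<noteq> w) \<and>
     graph_connected V E \<and> graph_acyclic V E \<and>
     inj_on pos V \<and>
     (\<forall>u w. {u, w} \<in> E \<longrightarrow> (\<forall>x\<in>V. pos x \<in> closed_segment (pos u) (pos w) \<longrightarrow> x = u \<or> x = w)) \<and>
     (\<forall>u w u' w'. {u, w} \<in> E \<longrightarrow> {u', w'} \<in> E \<longrightarrow> {u, w} \<noteq> {u', w'} \<longrightarrow>
        closed_segment (pos u) (pos w) \<inter> closed_segment (pos u') (pos w')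
          \<subseteq> pos ` ({u, w} \<inter> {u', w'}))"

definition realisation :: "'v set set \<Rightarrow> ('v \<Rightarrow> 'e::euclidean_space) \<Rightarrow> 'e set" where
  "realisation E pos = (\<Union>{closed_segment (pos u) (pos w) | u w. {u, w} \<in> E})"

definition Y_graph_at :: "'v set set \<Rightarrow> ('v \<Rightarrow> 'e::euclidean_space) \<Rightarrow> 'v \<Rightarrow> 'e set \<Rightarrow> bool" where
  "Y_graph_at E pos v Y \<longleftrightarrow>
     (\<exists>w1 w2 w3 q1 q2 q3. distinct [w1, w2, w3] \<and>
        {v, w1} \<in> E \<and> {v, w2} \<in> E \<and> {v, w3} \<in> E \<and>
        q1 \<in> open_segment (pos v) (pos w1) \<and>
        q2 \<in> open_segment (pos v) (pos w2) \<and>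
        q3 \<in> open_segment (pos v) (pos w3) \<and>
        Y = closed_segment (pos v) q1 \<union> closed_segment (pos v) q2 \<union> closed_segment (pos v) q3)"

text \<open>Points of X^k are functions on the index set {1..k} (extensional).\<close>
definition conf :: "nat \<Rightarrow> 'a topology \<Rightarrow> (nat \<Rightarrow> 'a) topology" where
  "conf k X = subtopology (product_topology (\<lambda>i. X) {1..k})
                 {x. \<forall>i\<in>{1..k}. \<forall>j\<in>{1..k}. i \<noteq> j \<longrightarrow> x i \<noteq> x j}"

type_synonym 'a cochain = "((nat \<Rightarrow> real) \<Rightarrow> 'a) \<Rightarrow> int"

text \<open>Coboundary of a (p-1)-cochain, evaluated on a p-simplex.\<close>
definition coboundary :: "nat \<Rightarrow> 'a cochain \<Rightarrow> 'a cochain" where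
  "coboundary p \<phi> \<sigma> = (\<Sum>k\<le>p. (-1) ^ k * \<phi> (singular_face p k \<sigma>))"

definition cocycle :: "nat \<Rightarrow> 'a topology \<Rightarrow> 'a cochain \<Rightarrow> bool" where
  "cocycle p X \<phi> \<longleftrightarrow> (\<forall>\<sigma>. singular_simplex (Suc p) X \<sigma> \<longrightarrow> coboundary (Suc p) \<phi> \<sigma> = 0)"

definition cohomologous :: "nat \<Rightarrow> 'a topology \<Rightarrow> 'a cochain \<Rightarrow> 'a cochain \<Rightarrow> bool" where
  "cohomologous p X \<phi> \<psi> \<longleftrightarrow>
     (\<exists>\<beta>. \<forall>\<sigma>. singular_simplex p X \<sigma> \<longrightarrow> \<phi> \<sigma> - \<psi> \<sigma> = coboundary p \<beta> \<sigma>)"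

text \<open>[g] generates H^1(X;Z) and H^1(X;Z) is infinite cyclic.\<close>
definition generator_H1 :: "'a topology \<Rightarrow> 'a cochain \<Rightarrow> bool" where
  "generator_H1 X g \<longleftrightarrow> cocycle 1 X g \<and>
     (\<forall>\<phi>. cocycle 1 X \<phi> \<longrightarrow> (\<exists>n::int. cohomologous 1 X \<phi> (\<lambda>\<sigma>. n * g \<sigma>))) \<and>
     (\<forall>n::int. cohomologous 1 X (\<lambda>\<sigma>. n * g \<sigma>) (\<lambda>\<sigma>. 0) \<longrightarrow> n = 0)"

definition cochain_pullback :: "nat \<Rightarrow> ('b \<Rightarrow> 'a) \<Rightarrow> 'a cochain \<Rightarrow> 'b cochain" where
  "cochain_pullback p f \<phi> \<sigma> = \<phi> (simplex_map p f \<sigma>)"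

text \<open>The k-th edge [e_(k-1), e_k] of a singular simplex.\<close>
definition simplex_edge :: "nat \<Rightarrow> ((nat \<Rightarrow> real) \<Rightarrow> 'a) \<Rightarrow> (nat \<Rightarrow> real) \<Rightarrow> 'a" where
  "simplex_edge k \<sigma> =
     restrict (\<sigma> \<circ> (\<lambda>t i. if i = k - 1 then t 0 else if i = k then t 1 else 0)) (standard_simplex 1)"

text \<open>Alexander--Whitney cup product of q one-cochains: an q-cochain.\<close>
definition cup1 :: "nat \<Rightarrow> (nat \<Rightarrow> 'a cochain) \<Rightarrow> 'a cochain" where
  "cup1 q \<phi>s \<sigma> = (\<Prod>k\<in>{1..q}. \<phi>s k (simplex_edge k \<sigma>))"

definition kron :: "'a cochain \<Rightarrow> 'a chain \<Rightarrow> int" where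
  "kron \<phi> c = (\<Sum>s\<in>Poly_Mapping.keys c. poly_mapping.lookup c s * \<phi> s)"

definition Psi :: "nat \<Rightarrow> (nat \<Rightarrow> nat \<Rightarrow> 'a) \<Rightarrow> nat \<Rightarrow> 'a" where
  "Psi l y = (\<lambda>i\<in>{1..2*l}. y ((i + 1) div 2) (if odd i then 1 else 2))"

definition Phi :: "nat \<Rightarrow> (nat \<Rightarrow> 'a) \<Rightarrow> nat \<Rightarrow> 'a" where
  "Phi i x = (\<lambda>k\<in>{1..2}. x (2 * i - 2 + k))"

definition gperm :: "nat \<Rightarrow> (nat \<Rightarrow> nat) \<Rightarrow> (nat \<Rightarrow> 'a) \<Rightarrow> nat \<Rightarrow> 'a" where
  "gperm l \<sigma> x = (\<lambda>k\<in>{1..2*l}. x (2 * \<sigma> ((k + 1) div 2) - (if odd k then 1 else 0)))"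

end

theory Submission
  imports Defs
begin

definition amap :: "nat \<Rightarrow> (nat \<Rightarrow> nat) \<Rightarrow> (nat \<Rightarrow> real) \<Rightarrow> nat \<Rightarrow> real" where
  "amap q w t = (\<lambda>i. \<Sum>j\<le>q. if w j = i then t j else 0)"

lemma amap_in:
  assumes t: "t \<in> standard_simplex q" and w: "\<And>j. j \<le> q \<Longrightarrow> w j \<le> p"
  shows "amap q w t \<in> standard_simplex p"
proof -
  have t0: "\<And>i. 0 \<le> t i" and t1: "\<And>i. t i \<le> 1" and tz: "\<And>i. i > q \<Longrightarrow> t i = 0"
    and ts: "(\<Sum>i\<le>q. t i) = 1" using t by (auto simp: standard_simplex_def)
  have nn: "0 \<le> amap q w t i" for i unfolding amap_def by (auto intro!: sum_nonneg simp: t0)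
  have le: "amap q w t i \<le> (\<Sum>j\<le>q. t j)" for i unfolding amap_def
    by (rule sum_mono) (auto simp: t0)
  have z: "amap q w t i = 0" if "i > p" for i
    unfolding amap_def using w that by (intro sum.neutral) force
  have "(\<Sum>i\<le>p. amap q w t i) = (\<Sum>j\<le>q. \<Sum>i\<le>p. if w j = i then t j else 0)"
    unfolding amap_def by (rule sum.swap)
  also have "\<dots> = (\<Sum>j\<le>q. t j)"
    by (rule sum.cong) (auto simp: w)
  finally show ?thesis using nn le z ts by (auto simp: standard_simplex_def)
qed

lemma amap_comp:
  assumes w': "\<And>j. j \<le> r \<Longrightarrow> w' j \<le> q"
  shows "amap q w (amap r w' t) = amap r (w \<circ> w') t"
proof
  fix i
  have "amap q w (amap r w' t) i = (\<Sum>j\<le>q. \<Sum>m\<le>r. if w j = i \<and> w' m = j then t m else 0)"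
    unfolding amap_def by (rule sum.cong) (auto intro: sum.neutral)
  also have "\<dots> = (\<Sum>m\<le>r. \<Sum>j\<le>q. if w j = i \<and> w' m = j then t m else 0)"
    by (rule sum.swap)
  also have "\<dots> = amap r (w \<circ> w') t i"
    unfolding amap_def
  proof (rule sum.cong)
    fix m assume "m \<in> {..r}"
    then have wq: "w' m \<le> q" using w' by auto
    have "(\<Sum>j\<le>q. if w j = i \<and> w' m = j then t m else 0) = (\<Sum>j\<le>q. if w' m = j then (if w j = i then t m else 0) else 0)"
      by (rule sum.cong) auto
    also have "\<dots> = (if (w \<circ> w') m = i then t m else 0)"
      using wq by (simp add: sum.delta)
    finally show "(\<Sum>j\<le>q. if w j = i \<and> w' m = j then t m else 0) = (if (w \<circ> w') m = i then t m else 0)" .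
  qed simp
  finally show "amap q w (amap r w' t) i = amap r (w \<circ> w') t i" .
qed

definition sub :: "((nat \<Rightarrow> real) \<Rightarrow> 'a) \<Rightarrow> nat \<Rightarrow> (nat \<Rightarrow> nat) \<Rightarrow> (nat \<Rightarrow> real) \<Rightarrow> 'a" where
  "sub s q w = restrict (s \<circ> amap q w) (standard_simplex q)"

lemma sub_cong: "(\<And>j. j \<le> q \<Longrightarrow> w j = w' j) \<Longrightarrow> sub s q w = sub s q w'"
  unfolding sub_def amap_def by (intro ext) (simp add: restrict_def)

lemma sub_sub:
  assumes "\<And>j. j \<le> r \<Longrightarrow> w' j \<le> q"
  shows "sub (sub s q w) r w' = sub s r (w \<circ> w')"
  unfolding sub_def using amap_in[OF _ assms] amap_comp[OF assms]
  by (intro ext) (simp add: restrict_def)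

lemma sub_id: "s \<in> extensional (standard_simplex q) \<Longrightarrow> sub s q id = s"
proof (intro ext)
  fix t assume e: "s \<in> extensional (standard_simplex q)"
  show "sub s q id t = s t"
  proof (cases "t \<in> standard_simplex q")
    case True
    have "amap q id t = t"
    proof
      fix i show "amap q id t i = t i"
        using True by (cases "i \<le> q") (auto simp: amap_def standard_simplex_def)
    qed
    then show ?thesis using True by (simp add: sub_def)
  next
    case False then show ?thesis using e by (simp add: sub_def extensional_def)
  qed
qed

definition fc :: "nat \<Rightarrow> nat \<Rightarrow> nat" where "fc k j = (if j < k then j else Suc j)"

lemma face_sub: "singular_face p k s = sub s (p - 1) (fc k)"
proof -
  have "simplical_face k t = amap (p - 1) (fc k) t" if "t \<in> standard_simplex (p - 1)" for t
  proof
    fix i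
    have tz: "\<And>i. i > p - 1 \<Longrightarrow> t i = 0" using that by (auto simp: standard_simplex_def)
    consider "i < k" | "i = k" | "i > k" by linarith
    then show "simplical_face k t i = amap (p - 1) (fc k) t i"
    proof cases
      case 1
      have "amap (p - 1) (fc k) t i = (\<Sum>j\<le>p - 1. if i = j then t j else 0)"
        unfolding amap_def using 1 by (intro sum.cong) (auto simp: fc_def)
      also have "\<dots> = t i" using tz[of i] by (auto simp: sum.delta)
      finally show ?thesis using 1 by (simp add: simplical_face_def)
    next
      case 2
      have "amap (p - 1) (fc k) t i = 0"
        unfolding amap_def using 2 by (intro sum.neutral) (auto simp: fc_def)
      then show ?thesis using 2 by (simp add: simplical_face_def)
    next
      case 3
      have "amap (p - 1) (fc k) t i = (\<Sum>j\<le>p - 1. if i - 1 = j then t j else 0)"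
        unfolding amap_def using 3 by (intro sum.cong) (auto simp: fc_def)
      also have "\<dots> = t (i - 1)" using tz[of "i - 1"] by (auto simp: sum.delta)
      finally show ?thesis using 3 by (simp add: simplical_face_def)
    qed
  qed
  then show ?thesis unfolding singular_face_def sub_def by (intro ext) (simp add: restrict_def)
qed


lemma sub_singular:
  assumes s: "singular_simplex p X s" and w: "\<And>j. j \<le> q \<Longrightarrow> w j \<le> p"
  shows "singular_simplex q X (sub s q w)"
proof -
  define l where "l = (\<lambda>j i. if w j = i then 1 else (0::real))"
  have am: "(\<lambda>i. \<Sum>j\<le>q. l j i * x j) = amap q w x" for x
    unfolding amap_def l_def by (intro ext sum.cong) auto
  have "simplicial_simplex q (standard_simplex p) (oriented_simplex q l)"
  proof -
    have "oriented_simplex q l ` standard_simplex q \<subseteq> standard_simplex p"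
      unfolding oriented_simplex_def using amap_in[OF _ w] am by auto
    then show ?thesis unfolding simplicial_simplex by blast
  qed
  then have c1: "continuous_map (subtopology (powertop_real UNIV) (standard_simplex q))
      (subtopology (powertop_real UNIV) (standard_simplex p)) (oriented_simplex q l)"
    by (simp add: simplicial_simplex_def singular_simplex_def)
  have c2: "continuous_map (subtopology (powertop_real UNIV) (standard_simplex p)) X s"
    using s by (simp add: singular_simplex_def)
  have "continuous_map (subtopology (powertop_real UNIV) (standard_simplex q)) X (s \<circ> oriented_simplex q l)"
    using continuous_map_compose[OF c1 c2] .
  then have "continuous_map (subtopology (powertop_real UNIV) (standard_simplex q)) X (sub s q w)"
    by (rule continuous_map_eq) (simp add: sub_def oriented_simplex_def am)
  then show ?thesis by (simp add: singular_simplex_def sub_def)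
qed

definition ev :: "nat \<Rightarrow> nat \<Rightarrow> nat" where "ev k j = (if j = 0 then k - 1 else k)"

lemma edge_sub: "1 \<le> k \<Longrightarrow> simplex_edge k s = sub s 1 (ev k)"
  unfolding simplex_edge_def sub_def
proof (intro ext)
  fix t assume k: "1 \<le> k"
  have "(\<lambda>i. if i = k - 1 then t 0 else if i = k then t 1 else 0) = amap 1 (ev k) t"
    using k by (auto simp: amap_def ev_def fun_eq_iff)
  then show "restrict (s \<circ> (\<lambda>t i. if i = k - 1 then t 0 else if i = k then t 1 else 0)) (standard_simplex 1) t =
         restrict (s \<circ> amap 1 (ev k)) (standard_simplex 1) t" by simp
qed

lemma simplex_map_sub:
  assumes "\<And>j. j \<le> q \<Longrightarrow> w j \<le> p"
  shows "simplex_map q f (sub s q w) = sub (simplex_map p f s) q w"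
  unfolding simplex_map_def sub_def using amap_in[OF _ assms] by (intro ext) (simp add: restrict_def)

lemma sub_extensional: "sub s q w \<in> extensional (standard_simplex q)"
  by (simp add: sub_def)


lemma sum_split_atMost:
  "(\<Sum>k\<le>Suc (q + r). f k) = (\<Sum>k\<le>q. f k) + (\<Sum>i\<le>r. f (Suc (q + i)))"
  by (induction r) (auto simp: add.assoc)

definition cupg :: "nat \<Rightarrow> nat \<Rightarrow> 'a cochain \<Rightarrow> 'a cochain \<Rightarrow> 'a cochain" where
  "cupg q r c d s = c (sub s q id) * d (sub s r (\<lambda>j. q + j))"

lemma leibniz:
  "coboundary (Suc (q + r)) (cupg q r c d) s =
     cupg (Suc q) r (coboundary (Suc q) c) d s + (-1)^q * cupg q (Suc r) c (coboundary (Suc r) d) s"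
proof -
  have eta[simp]: "((+) (Suc q)) = (\<lambda>j::nat. Suc (q + j))" by auto
  define T where "T k = (-1)^k * (c (sub s q (fc k)) * d (sub s r (fc k \<circ> (\<lambda>j. q + j))))" for k
  define D where "D = d (sub s r (\<lambda>j. Suc (q + j)))"
  define C where "C = c (sub s q id)"
  have fcid: "sub s q (fc k) = sub s q id" if "q < k" for k
    using that by (intro sub_cong) (auto simp: fc_def)
  have "coboundary (Suc (q + r)) (cupg q r c d) s = (\<Sum>k\<le>Suc (q + r). T k)"
    unfolding coboundary_def cupg_def T_def face_sub
    by (intro sum.cong refl) (simp add: sub_sub fc_def)
  also have "\<dots> = (\<Sum>k\<le>q. T k) + (\<Sum>i\<le>r. T (Suc (q + i)))"
    by (rule sum_split_atMost)
  finally have L: "coboundary (Suc (q + r)) (cupg q r c d) s = (\<Sum>k\<le>q. T k) + (\<Sum>i\<le>r. T (Suc (q + i)))" .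
  have T1: "T k = (-1)^k * c (sub s q (fc k)) * D" if "k \<le> q" for k
  proof -
    have "sub s r (fc k \<circ> (\<lambda>j. q + j)) = sub s r (\<lambda>j. Suc (q + j))"
      using that by (intro sub_cong) (auto simp: fc_def)
    then show ?thesis by (simp add: T_def D_def)
  qed
  have T2: "T (Suc (q + i)) = (-1)^q * (-1)^(Suc i) * C * d (sub s r ((\<lambda>j. q + j) \<circ> fc (Suc i)))" for i
  proof -
    have "sub s r (fc (Suc (q + i)) \<circ> (\<lambda>j. q + j)) = sub s r ((\<lambda>j. q + j) \<circ> fc (Suc i))"
      by (intro sub_cong) (auto simp: fc_def)
    then show ?thesis by (simp add: T_def C_def fcid power_add)
  qed
  have R1: "cupg (Suc q) r (coboundary (Suc q) c) d s = (\<Sum>k\<le>q. (-1)^k * c (sub s q (fc k)) * D) + (-1)^(Suc q) * C * D"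
  proof -
    have "cupg (Suc q) r (coboundary (Suc q) c) d s = (\<Sum>k\<le>Suc q. (-1)^k * c (sub s q (fc k))) * D"
      unfolding cupg_def coboundary_def face_sub D_def
      by (simp add: sub_sub fc_def)
    also have "\<dots> = (\<Sum>k\<le>q. (-1)^k * c (sub s q (fc k)) * D) + (-1)^(Suc q) * C * D"
      by (simp add: sum_distrib_right fcid C_def left_diff_distrib)
    finally show ?thesis .
  qed
  have R2: "cupg q (Suc r) c (coboundary (Suc r) d) s = C * D + (\<Sum>i\<le>r. (-1)^(Suc i) * C * d (sub s r ((\<lambda>j. q + j) \<circ> fc (Suc i))))"
  proof -
    have "cupg q (Suc r) c (coboundary (Suc r) d) s = C * (\<Sum>k\<le>Suc r. (-1)^k * d (sub s r ((\<lambda>j. q + j) \<circ> fc k)))"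
      unfolding cupg_def coboundary_def face_sub C_def
      by (simp add: sub_sub fc_def)
    also have "\<dots> = C * D + (\<Sum>i\<le>r. (-1)^(Suc i) * C * d (sub s r ((\<lambda>j. q + j) \<circ> fc (Suc i))))"
    proof -
      have "sub s r ((\<lambda>j. q + j) \<circ> fc 0) = sub s r (\<lambda>j. Suc (q + j))"
        by (intro sub_cong) (auto simp: fc_def)
      then show ?thesis
        apply (subst sum.atMost_Suc_shift)
        apply (simp only: distrib_left sum_distrib_left D_def)
        apply (simp add: mult.assoc mult.left_commute)
        done
    qed
    finally show ?thesis .
  qed
  show ?thesis
    unfolding L R1 R2
    by (simp add: T1 T2 sum_distrib_left distrib_left mult.assoc mult.left_commute)
qed


definition PP :: "(nat \<Rightarrow> 'a cochain) \<Rightarrow> nat \<Rightarrow> 'a cochain" where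
  "PP f n s = (\<Prod>k\<in>{1..n}. f k (sub s 1 (ev k)))"

lemma PP_0: "PP f 0 = (\<lambda>_. 1)"
  by (simp add: PP_def fun_eq_iff)

lemma PP_Suc: "PP f (Suc n) = cupg n 1 (PP f n) (f (Suc n))"
proof (intro ext)
  fix s
  have "PP f n (sub s n id) = (\<Prod>k\<in>{1..n}. f k (sub s 1 (ev k)))"
    unfolding PP_def by (intro prod.cong refl) (subst sub_sub, auto simp: ev_def)
  moreover have "sub s 1 ((+) n) = sub s 1 (ev (Suc n))"
    by (intro sub_cong) (auto simp: ev_def)
  ultimately show "PP f (Suc n) s = cupg n 1 (PP f n) (f (Suc n)) s"
    by (simp add: PP_def cupg_def)
qed

lemma PP_cocycle:
  assumes "\<And>k. k \<in> {1..n} \<Longrightarrow> cocycle 1 X (f k)"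
  shows "singular_simplex (Suc n) X s \<Longrightarrow> coboundary (Suc n) (PP f n) s = 0"
  using assms
proof (induction n arbitrary: s)
  case 0
  then show ?case by (simp add: PP_0 coboundary_def)
next
  case (Suc n)
  have "coboundary (Suc (Suc n)) (PP f (Suc n)) s = coboundary (Suc (n + 1)) (cupg n 1 (PP f n) (f (Suc n))) s"
    by (simp add: PP_Suc)
  also have "\<dots> = cupg (Suc n) 1 (coboundary (Suc n) (PP f n)) (f (Suc n)) s
       + (-1)^n * cupg n (Suc 1) (PP f n) (coboundary (Suc 1) (f (Suc n))) s"
    by (rule leibniz)
  also have "\<dots> = 0"
  proof -
    have "coboundary (Suc n) (PP f n) (sub s (Suc n) id) = 0"
      using Suc by (intro Suc.IH sub_singular[OF Suc.prems(1)]) auto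
    moreover have "coboundary (Suc 1) (f (Suc n)) (sub s (Suc 1) ((+) n)) = 0"
      using Suc.prems(2)[of "Suc n"] sub_singular[OF Suc.prems(1), of "Suc 1" "(+) n"]
      unfolding cocycle_def by auto
    ultimately show ?thesis by (simp add: cupg_def)
  qed
  finally show ?case .
qed

lemma kron_superset:
  assumes "finite S" "Poly_Mapping.keys c \<subseteq> S"
  shows "kron \<phi> c = (\<Sum>s\<in>S. poly_mapping.lookup c s * \<phi> s)"
  unfolding kron_def using assms
  by (intro sum.mono_neutral_left) (auto simp: in_keys_iff)

lemma kron_0 [simp]: "kron \<phi> 0 = 0"
  by (simp add: kron_def)

lemma kron_of [simp]: "kron \<phi> (frag_of s) = \<phi> s"
  by (simp add: kron_def keys_frag_of)

lemma kron_diff: "kron \<phi> (a - b) = kron \<phi> a - kron \<phi> b"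
proof -
  let ?S = "Poly_Mapping.keys a \<union> Poly_Mapping.keys b"
  have f: "finite ?S" by simp
  have "Poly_Mapping.keys (a - b) \<subseteq> ?S" by (meson keys_diff)
  then show ?thesis
    using kron_superset[OF f] f
    by (simp add: lookup_minus left_diff_distrib sum_subtractf)
qed

lemma kron_add: "kron \<phi> (a + b) = kron \<phi> a + kron \<phi> b"
proof -
  let ?S = "Poly_Mapping.keys a \<union> Poly_Mapping.keys b"
  have f: "finite ?S" by simp
  have "Poly_Mapping.keys (a + b) \<subseteq> ?S" by (meson keys_add)
  then show ?thesis
    using kron_superset[OF f] f
    by (simp add: lookup_add distrib_right sum.distrib)
qed

lemma kron_cmul: "kron \<phi> (frag_cmul a c) = a * kron \<phi> c"
proof -
  have k: "Poly_Mapping.keys (frag_cmul a c) \<subseteq> Poly_Mapping.keys c"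
    by (simp add: keys_cmul)
  have "kron \<phi> (frag_cmul a c) = (\<Sum>s\<in>Poly_Mapping.keys c. poly_mapping.lookup (frag_cmul a c) s * \<phi> s)"
    by (rule kron_superset[OF finite_keys k])
  also have "\<dots> = a * kron \<phi> c"
    unfolding kron_def by (simp add: sum_distrib_left mult.assoc)
  finally show ?thesis .
qed

lemma kron_sum: "finite I \<Longrightarrow> kron \<phi> (sum f I) = (\<Sum>i\<in>I. kron \<phi> (f i))"
  by (induction I rule: finite_induct) (auto simp: kron_add)

lemma kron_cong: "(\<And>s. s \<in> Poly_Mapping.keys c \<Longrightarrow> \<phi> s = \<psi> s) \<Longrightarrow> kron \<phi> c = kron \<psi> c"
  unfolding kron_def by (rule sum.cong) auto

lemma kron_fdiff: "kron (\<lambda>s. \<phi> s - \<psi> s) c = kron \<phi> c - kron \<psi> c"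
  unfolding kron_def by (simp add: right_diff_distrib sum_subtractf)

lemma kron_fadd: "kron (\<lambda>s. \<phi> s + \<psi> s) c = kron \<phi> c + kron \<psi> c"
  unfolding kron_def by (simp add: distrib_left sum.distrib)

lemma kron_fmul: "kron (\<lambda>s. a * \<phi> s) c = a * kron \<phi> c"
  unfolding kron_def by (simp add: sum_distrib_left mult.left_commute)

lemma kron_chain_map: "kron \<phi> (chain_map p f c) = kron (\<lambda>s. \<phi> (simplex_map p f s)) c"
proof -
  have "Poly_Mapping.keys c \<subseteq> Poly_Mapping.keys c" by simp
  then show ?thesis
    by (induction c rule: frag_induction) (auto simp: chain_map_diff kron_diff)
qed

lemma kron_boundary:
  assumes "1 \<le> p"
  shows "kron \<phi> (chain_boundary p c) = kron (coboundary p \<phi>) c"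
proof -
  have "Poly_Mapping.keys c \<subseteq> Poly_Mapping.keys c" by simp
  then show ?thesis
  proof (induction c rule: frag_induction)
    case (one x)
    then show ?case using assms
      by (simp add: chain_boundary_of kron_sum kron_cmul coboundary_def)
  qed (auto simp: chain_boundary_diff kron_diff)
qed

lemma kron_cycle:
  assumes "singular_relcycle p X {} c" "1 \<le> p"
  shows "kron (coboundary p \<phi>) c = 0"
  using assms kron_boundary[OF assms(2), of \<phi> c] by (simp add: singular_cycle)

lemma prod_split3:
  fixes g :: "nat \<Rightarrow> 'b::comm_monoid_mult"
  assumes i: "i \<in> {1..l}"
  shows "(\<Prod>k\<in>{1..l}. g k) = (\<Prod>k\<in>{1..i-1}. g k) * g i * (\<Prod>k\<in>{1..l-i}. g (k + i))"
proof -
  have u: "{1..l} = {1..i-1} \<union> {i..l}" using i by auto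
  have "(\<Prod>k\<in>{1..l}. g k) = (\<Prod>k\<in>{1..i-1}. g k) * (\<Prod>k\<in>{i..l}. g k)"
    unfolding u by (rule prod.union_disjoint) auto
  moreover have "(\<Prod>k\<in>{i..l}. g k) = g i * (\<Prod>k\<in>{Suc i..l}. g k)"
    using i by (simp add: prod.atLeast_Suc_atMost)
  moreover have "(\<Prod>k\<in>{Suc i..l}. g k) = (\<Prod>k\<in>{1..l-i}. g (k + i))"
  proof -
    have "{Suc i..l} = {1 + i..(l - i) + i}" using i by auto
    then show ?thesis by (simp only: prod.shift_bounds_cl_nat_ivl)
  qed
  ultimately show ?thesis by (simp add: mult.assoc)
qed

lemma PP_sub_shift:
  "PP f n (sub s n (\<lambda>j. a + j)) = (\<Prod>k\<in>{1..n}. f k (sub s 1 (ev (k + a))))"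
  unfolding PP_def
proof (intro prod.cong refl)
  fix k assume k: "k \<in> {1..n}"
  have "sub (sub s n (\<lambda>j. a + j)) 1 (ev k) = sub s 1 ((\<lambda>j. a + j) \<circ> ev k)"
    using k by (intro sub_sub) (auto simp: ev_def)
  also have "\<dots> = sub s 1 (ev (k + a))"
    using k by (intro sub_cong) (auto simp: ev_def)
  finally show "f k (sub (sub s n (\<lambda>j. a + j)) 1 (ev k)) = f k (sub s 1 (ev (k + a)))" by simp
qed

lemma PP_sub_id:
  "PP f n (sub s n id) = (\<Prod>k\<in>{1..n}. f k (sub s 1 (ev k)))"
proof -
  have "sub s n id = sub s n (\<lambda>j. 0 + j)" by (intro sub_cong) auto
  then show ?thesis using PP_sub_shift[of f n s 0] by simp
qed

lemma replace_one:
  assumes i: "i \<in> {1..l}"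
    and cA: "\<And>k. k \<in> {1..l} \<Longrightarrow> cocycle 1 X (A k)"
    and AA': "\<And>k. k \<noteq> i \<Longrightarrow> A' k = A k"
    and hom: "\<And>\<tau>. singular_simplex 1 X \<tau> \<Longrightarrow> A i \<tau> - A' i \<tau> = coboundary 1 \<beta> \<tau>"
    and t: "singular_relcycle l X {} t"
  shows "kron (PP A l) t = kron (PP A' l) t"
proof -
  define q where "q = i - 1"
  define r where "r = l - i"
  have lq: "l = Suc (q + r)" and iq: "i = Suc q" using i by (auto simp: q_def r_def)
  define F where "F = PP A q"
  define H where "H = PP (\<lambda>k. A (k + i)) r"
  define M where "M = cupg q r (cupg q 0 F \<beta>) H"
  have key: "PP A l s - PP A' l s = (-1)^q * coboundary l M s" if s: "singular_simplex l X s" for s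
  proof -
    have "coboundary l M s = cupg (Suc q) r (coboundary (Suc q) (cupg q 0 F \<beta>)) H s
        + (-1)^q * cupg q (Suc r) (cupg q 0 F \<beta>) (coboundary (Suc r) H) s"
      unfolding lq M_def by (rule leibniz)
    moreover have "coboundary (Suc r) H (sub s (Suc r) (\<lambda>j. q + j)) = 0"
    proof -
      have cH: "\<And>k. k \<in> {1..r} \<Longrightarrow> cocycle 1 X (A (k + i))" using cA by (auto simp: lq iq)
      show ?thesis unfolding H_def
        by (rule PP_cocycle[where X=X, OF cH]) (auto intro!: sub_singular[OF s] simp: lq iq)
    qed
    moreover have
      "coboundary (Suc q) (cupg q 0 F \<beta>) (sub s (Suc q) id) =
         cupg (Suc q) 0 (coboundary (Suc q) F) \<beta> (sub s (Suc q) id)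
       + (-1)^q * cupg q (Suc 0) F (coboundary (Suc 0) \<beta>) (sub s (Suc q) id)"
      using leibniz[of q 0 F \<beta> "sub s (Suc q) id"] by simp
    moreover have "coboundary (Suc q) F (sub (sub s (Suc q) id) (Suc q) id) = 0"
    proof -
      have cF: "\<And>k. k \<in> {1..q} \<Longrightarrow> cocycle 1 X (A k)" using cA by (auto simp: lq)
      show ?thesis unfolding F_def
        by (rule PP_cocycle[where X=X, OF cF]) (auto intro!: sub_singular[OF s] sub_singular simp: lq iq)
    qed
    moreover have "sub (sub s (Suc q) id) q id = sub s q id"
      by (subst sub_sub) auto
    moreover have "sub (sub s (Suc q) id) (Suc 0) (\<lambda>j. q + j) = sub s 1 (ev i)"
      by (subst sub_sub) (auto intro!: sub_cong simp: ev_def iq)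
    moreover have "coboundary 1 \<beta> (sub s 1 (ev i)) = A i (sub s 1 (ev i)) - A' i (sub s 1 (ev i))"
    proof -
      have "\<And>j. j \<le> 1 \<Longrightarrow> ev i j \<le> l" using i by (auto simp: ev_def)
      from hom[OF sub_singular[OF s this]] show ?thesis by simp
    qed
    moreover have "F (sub s q id) = (\<Prod>k\<in>{1..i-1}. A k (sub s 1 (ev k)))"
      unfolding F_def PP_sub_id q_def ..
    moreover have "H (sub s r (\<lambda>j. Suc q + j)) = (\<Prod>k\<in>{1..l-i}. A (k + i) (sub s 1 (ev (k + i))))"
      unfolding H_def PP_sub_shift by (simp add: iq r_def)
    ultimately have cb: "coboundary l M s = (-1)^q * (\<Prod>k\<in>{1..i-1}. A k (sub s 1 (ev k)))
        * (A i (sub s 1 (ev i)) - A' i (sub s 1 (ev i))) * (\<Prod>k\<in>{1..l-i}. A (k + i) (sub s 1 (ev (k + i))))"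
      by (simp add: cupg_def)
    have pa: "PP A l s = (\<Prod>k\<in>{1..i-1}. A k (sub s 1 (ev k))) * A i (sub s 1 (ev i)) * (\<Prod>k\<in>{1..l-i}. A (k + i) (sub s 1 (ev (k + i))))"
      unfolding PP_def by (rule prod_split3[OF i])
    have pa': "PP A' l s = (\<Prod>k\<in>{1..i-1}. A k (sub s 1 (ev k))) * A' i (sub s 1 (ev i)) * (\<Prod>k\<in>{1..l-i}. A (k + i) (sub s 1 (ev (k + i))))"
      unfolding PP_def prod_split3[OF i] using AA' by (auto intro!: prod.cong)
    have sq: "(-1::int)^q * (-1)^q = 1"
      by (induction q) auto
    have "(-1)^q * coboundary l M s = ((-1::int)^q * (-1)^q) * ((\<Prod>k\<in>{1..i-1}. A k (sub s 1 (ev k)))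
        * (A i (sub s 1 (ev i)) - A' i (sub s 1 (ev i))) * (\<Prod>k\<in>{1..l-i}. A (k + i) (sub s 1 (ev (k + i)))))"
      unfolding cb by (simp only: mult.assoc)
    then show ?thesis unfolding sq pa pa' by (simp add: algebra_simps)
  qed
  have "kron (PP A l) t - kron (PP A' l) t = kron (\<lambda>s. (-1)^q * coboundary l M s) t"
    unfolding kron_fdiff[symmetric]
    using t by (intro kron_cong key) (auto simp: singular_cycle singular_chain_def)
  also have "\<dots> = 0" using t i by (simp add: kron_fmul kron_cycle[OF t])
  finally show ?thesis by simp
qed

lemma swap_adj:
  assumes i: "1 \<le> i" "Suc i \<le> l"
    and cf: "\<And>k. k \<in> {1..l} \<Longrightarrow> cocycle 1 X (f k)"
    and t: "singular_relcycle l X {} t"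
  shows "kron (PP (f \<circ> Transposition.transpose i (Suc i)) l) t = - kron (PP f l) t"
proof -
  define q where "q = i - 1"
  define r where "r = l - Suc i"
  have lq: "l = Suc (i + r)" and iq: "i = Suc q" using i by (auto simp: q_def r_def)
  define f' where "f' = f \<circ> Transposition.transpose i (Suc i)"
  define F where "F = PP f q"
  define H where "H = PP (\<lambda>k. f (k + Suc i)) r"
  define ab where "ab = (\<lambda>\<tau>. f i \<tau> * f (Suc i) \<tau>)"
  define M where "M = cupg i r (cupg q 1 F ab) H"
  define e where "e s k = sub s 1 (ev k)" for s :: "(nat \<Rightarrow> real) \<Rightarrow> 'a" and k
  have key: "PP f' l s = - PP f l s - (-1)^q * coboundary l M s" if s: "singular_simplex l X s" for s
  proof -
    define P1 where "P1 = (\<Prod>k\<in>{1..i-1}. f k (e s k))"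
    define P2 where "P2 = (\<Prod>k\<in>{1..r}. f (k + Suc i) (e s (k + Suc i)))"
    have "coboundary l M s = cupg (Suc i) r (coboundary (Suc i) (cupg q 1 F ab)) H s
        + (-1)^i * cupg i (Suc r) (cupg q 1 F ab) (coboundary (Suc r) H) s"
      unfolding lq M_def by (rule leibniz)
    moreover have "coboundary (Suc r) H (sub s (Suc r) (\<lambda>j. i + j)) = 0"
    proof -
      have cH: "\<And>k. k \<in> {1..r} \<Longrightarrow> cocycle 1 X (f (k + Suc i))" using cf by (auto simp: lq)
      show ?thesis unfolding H_def
        by (rule PP_cocycle[where X=X, OF cH]) (auto intro!: sub_singular[OF s] simp: lq)
    qed
    moreover have
      "coboundary (Suc i) (cupg q 1 F ab) (sub s (Suc i) id) =
         cupg (Suc q) 1 (coboundary (Suc q) F) ab (sub s (Suc i) id)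
       + (-1)^q * cupg q (Suc 1) F (coboundary (Suc 1) ab) (sub s (Suc i) id)"
      using leibniz[of q 1 F ab "sub s (Suc i) id"] by (simp add: iq)
    moreover have "coboundary (Suc q) F (sub (sub s (Suc i) id) (Suc q) id) = 0"
    proof -
      have cF: "\<And>k. k \<in> {1..q} \<Longrightarrow> cocycle 1 X (f k)" using cf by (auto simp: lq iq)
      show ?thesis unfolding F_def
        by (rule PP_cocycle[where X=X, OF cF]) (auto intro!: sub_singular[OF s] sub_singular simp: lq iq)
    qed
    moreover have "sub (sub s (Suc i) id) q id = sub s q id"
      by (subst sub_sub) (auto simp: iq)
    moreover have "sub (sub s (Suc i) id) (Suc 1) (\<lambda>j. q + j) = sub s 2 (\<lambda>j. q + j)"
      by (subst sub_sub) (auto simp: iq numeral_2_eq_2)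
    moreover have "coboundary (Suc 1) ab (sub s 2 (\<lambda>j. q + j)) =
        - (f i (e s i) * f (Suc i) (e s (Suc i)) + f i (e s (Suc i)) * f (Suc i) (e s i))"
    proof -
      define \<tau> where "\<tau> = sub s 2 (\<lambda>j. q + j)"
      have st: "singular_simplex 2 X \<tau>" unfolding \<tau>_def
        by (rule sub_singular[OF s]) (auto simp: lq iq)
      have F0: "singular_face 2 0 \<tau> = e s (Suc i)"
        unfolding \<tau>_def face_sub e_def by (subst sub_sub) (auto intro!: sub_cong simp: fc_def ev_def iq)
      have F2: "singular_face 2 2 \<tau> = e s i"
        unfolding \<tau>_def face_sub e_def by (subst sub_sub) (auto intro!: sub_cong simp: fc_def ev_def iq)
      have c2: "\<And>g. cocycle 1 X g \<Longrightarrow> g (singular_face 2 1 \<tau>) = g (singular_face 2 0 \<tau>) + g (singular_face 2 2 \<tau>)"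
      proof -
        fix g assume "cocycle 1 X g"
        then have "coboundary 2 g \<tau> = 0" using st by (auto simp: cocycle_def numeral_2_eq_2)
        then show "g (singular_face 2 1 \<tau>) = g (singular_face 2 0 \<tau>) + g (singular_face 2 2 \<tau>)"
          by (simp add: coboundary_def numeral_2_eq_2)
      qed
      have a1: "f i (singular_face 2 1 \<tau>) = f i (singular_face 2 0 \<tau>) + f i (singular_face 2 2 \<tau>)"
        using c2 cf i by auto
      have b1: "f (Suc i) (singular_face 2 1 \<tau>) = f (Suc i) (singular_face 2 0 \<tau>) + f (Suc i) (singular_face 2 2 \<tau>)"
        using c2 cf i by auto
      have "coboundary (Suc 1) ab \<tau> = ab (singular_face 2 0 \<tau>) - ab (singular_face 2 1 \<tau>) + ab (singular_face 2 2 \<tau>)"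
        by (simp add: coboundary_def numeral_2_eq_2)
      also have "\<dots> = - (f i (singular_face 2 2 \<tau>) * f (Suc i) (singular_face 2 0 \<tau>) + f i (singular_face 2 0 \<tau>) * f (Suc i) (singular_face 2 2 \<tau>))"
        unfolding ab_def a1 b1 by (simp add: algebra_simps)
      finally have "coboundary (Suc 1) ab \<tau> = - (f i (e s i) * f (Suc i) (e s (Suc i)) + f i (e s (Suc i)) * f (Suc i) (e s i))"
        unfolding F0 F2 by (simp add: algebra_simps)
      then show ?thesis unfolding \<tau>_def .
    qed
    moreover have "F (sub s q id) = P1"
      unfolding F_def PP_sub_id q_def P1_def e_def ..
    moreover have "H (sub s r (\<lambda>j. Suc i + j)) = P2"
      unfolding H_def PP_sub_shift P2_def e_def by (simp add: add.commute)
    ultimately have cb: "coboundary l M s = (-1)^q * (P1 * (- (f i (e s i) * f (Suc i) (e s (Suc i)) + f i (e s (Suc i)) * f (Suc i) (e s i))) * P2)"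
      by (simp add: cupg_def mult.assoc)
    have split: "(\<Prod>k\<in>{1..l}. g k) = P * g i * g (Suc i) * (\<Prod>k\<in>{1..r}. g (k + Suc i))"
      if "P = (\<Prod>k\<in>{1..i-1}. g k)" for g :: "nat \<Rightarrow> int" and P
    proof -
      have i1: "i \<in> {1..l}" using i by auto
      have "(\<Prod>k\<in>{1..l-i}. g (k + i)) = g (Suc i) * (\<Prod>k\<in>{1..r}. g (k + Suc i))"
      proof -
        have "1 \<in> {1..l-i}" using i by auto
        from prod_split3[OF this, of "\<lambda>k. g (k + i)"] show ?thesis
          by (simp add: r_def add.commute add.left_commute)
      qed
      then show ?thesis using prod_split3[OF i1, of g] that by (simp add: mult.assoc)
    qed
    have pf: "PP f l s = P1 * f i (e s i) * f (Suc i) (e s (Suc i)) * P2"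
      unfolding PP_def P2_def e_def by (rule split) (simp add: P1_def e_def)
    have pf': "PP f' l s = P1 * f (Suc i) (e s i) * f i (e s (Suc i)) * P2"
    proof -
      have "PP f' l s = P1 * f' i (e s i) * f' (Suc i) (e s (Suc i)) * (\<Prod>k\<in>{1..r}. f' (k + Suc i) (e s (k + Suc i)))"
        unfolding PP_def e_def by (rule split) (auto simp: P1_def e_def f'_def intro!: prod.cong)
      also have "(\<Prod>k\<in>{1..r}. f' (k + Suc i) (e s (k + Suc i))) = P2"
        unfolding P2_def f'_def by (intro prod.cong) auto
      finally show ?thesis by (simp add: f'_def comp_def)
    qed
    have sq: "(-1::int)^q * (-1)^q = 1"
      by (induction q) auto
    have "(-1)^q * coboundary l M s = ((-1::int)^q * (-1)^q) * (P1 * (- (f i (e s i) * f (Suc i) (e s (Suc i)) + f i (e s (Suc i)) * f (Suc i) (e s i))) * P2)"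
      unfolding cb by (simp only: mult.assoc)
    then show ?thesis unfolding sq pf pf' by (simp add: algebra_simps)
  qed
  have "kron (PP f' l) t = kron (\<lambda>s. - PP f l s - (-1)^q * coboundary l M s) t"
    using t by (intro kron_cong key) (auto simp: singular_cycle singular_chain_def)
  also have "\<dots> = - kron (PP f l) t"
    using kron_fdiff[of "\<lambda>s. - PP f l s" "\<lambda>s. (-1)^q * coboundary l M s" t]
      kron_fmul[of "-1" "PP f l" t] kron_fmul[of "(-1)^q" "coboundary l M" t] kron_cycle[OF t, of M] i
    by simp
  finally show ?thesis by (simp add: f'_def)
qed

lemma transpose_in: "x \<in> {1..l} \<Longrightarrow> y \<in> {1..l} \<Longrightarrow> k \<in> {1..l} \<Longrightarrow> Transposition.transpose x y k \<in> {1..l}"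
  by (cases "k = x"; cases "k = y") auto

lemma transp_kron:
  assumes a: "1 \<le> a" and b: "Suc (a + d) \<le> l" and t: "singular_relcycle l X {} t"
  shows "\<forall>f. (\<forall>k\<in>{1..l}. cocycle 1 X (f k)) \<longrightarrow>
           kron (PP (f \<circ> Transposition.transpose a (Suc (a + d))) l) t = - kron (PP f l) t"
  using b
proof (induction d)
  case 0
  show ?case
  proof (intro allI impI)
    fix f assume "\<forall>k\<in>{1..l}. cocycle 1 X (f k)"
    then show "kron (PP (f \<circ> Transposition.transpose a (Suc (a + 0))) l) t = - kron (PP f l) t"
      using swap_adj[OF a _ _ t, of f] 0 by simp
  qed
next
  case (Suc d)
  define b where "b = Suc (a + d)"
  define s where "s = Transposition.transpose b (Suc b)"
  have bl: "Suc b \<le> l" using Suc.prems by (simp add: b_def)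
  have eq: "Transposition.transpose a (Suc b) = s \<circ> Transposition.transpose a b \<circ> s"
    using a by (auto simp: s_def b_def Transposition.transpose_def fun_eq_iff)
  show ?case
  proof (intro allI impI)
    fix f assume cf: "\<forall>k\<in>{1..l}. cocycle 1 X (f k)"
    have cfs: "\<forall>k\<in>{1..l}. cocycle 1 X ((f \<circ> s) k)"
      using cf transpose_in[of b l "Suc b"] bl b_def by (auto simp: s_def)
    have cfst: "\<forall>k\<in>{1..l}. cocycle 1 X ((f \<circ> s \<circ> Transposition.transpose a b) k)"
      using cfs transpose_in[of a l b] bl b_def a by auto
    have "f \<circ> Transposition.transpose a (Suc (a + Suc d)) = (f \<circ> s \<circ> Transposition.transpose a b) \<circ> s"
    proof -
      have "Suc (a + Suc d) = Suc b" by (simp add: b_def)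
      then show ?thesis by (simp only: eq comp_assoc)
    qed
    then have "kron (PP (f \<circ> Transposition.transpose a (Suc (a + Suc d))) l) t
        = - kron (PP (f \<circ> s \<circ> Transposition.transpose a b) l) t"
      using swap_adj[of b l X "f \<circ> s \<circ> Transposition.transpose a b", OF _ bl _ t] cfst
      by (simp add: s_def b_def)
    also have "\<dots> = kron (PP (f \<circ> s) l) t"
    proof -
      have ble: "Suc (a + d) \<le> l" using bl b_def by simp
      have "kron (PP ((f \<circ> s) \<circ> Transposition.transpose a (Suc (a + d))) l) t = - kron (PP (f \<circ> s) l) t"
        using Suc.IH[OF ble] cfs by blast
      then show ?thesis unfolding b_def by (metis minus_minus)
    qed
    also have "\<dots> = - kron (PP f l) t"
      using swap_adj[of b l X f, OF _ bl _ t] cf by (simp add: s_def b_def)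
    finally show "kron (PP (f \<circ> Transposition.transpose a (Suc (a + Suc d))) l) t = - kron (PP f l) t" .
  qed
qed

lemma transp_kron':
  assumes ab: "a \<in> {1..l}" "b \<in> {1..l}" "a \<noteq> b" and t: "singular_relcycle l X {} t"
    and cf: "\<forall>k\<in>{1..l}. cocycle 1 X (f k)"
  shows "kron (PP (f \<circ> Transposition.transpose a b) l) t = - kron (PP f l) t"
proof (cases "a < b")
  case True
  then obtain d where "b = Suc (a + d)" by (metis less_imp_Suc_add)
  then show ?thesis using transp_kron[of a d l X t] ab t cf by auto
next
  case False
  then obtain d where "a = Suc (b + d)" using ab by (metis less_imp_Suc_add nat_neq_iff)
  then show ?thesis using transp_kron[of b d l X t] ab t cf by (auto simp: transpose_commute)
qed

lemma perm_kron:
  assumes p: "p permutes {1..l}" and t: "singular_relcycle l X {} t"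
  shows "\<forall>f. (\<forall>k\<in>{1..l}. cocycle 1 X (f k)) \<longrightarrow>
           kron (PP (f \<circ> p) l) t = kron (PP f l) t \<or> kron (PP (f \<circ> p) l) t = - kron (PP f l) t"
  using p finite_atLeastAtMost
proof (induction p rule: permutes_induct)
  case id
  then show ?case by simp
next
  case (swap a b p)
  show ?case
  proof (intro allI impI)
    fix f assume cf: "\<forall>k\<in>{1..l}. cocycle 1 X (f k)"
    have cft: "\<forall>k\<in>{1..l}. cocycle 1 X ((f \<circ> Transposition.transpose a b) k)"
      using cf transpose_in[OF swap(1,2)] by auto
    have eqf: "f \<circ> (Transposition.transpose a b \<circ> p) = (f \<circ> Transposition.transpose a b) \<circ> p"
      by (simp add: comp_assoc)
    have h: "kron (PP ((f \<circ> Transposition.transpose a b) \<circ> p) l) t = kron (PP (f \<circ> Transposition.transpose a b) l) t \<or>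
       kron (PP ((f \<circ> Transposition.transpose a b) \<circ> p) l) t = - kron (PP (f \<circ> Transposition.transpose a b) l) t"
      using swap.IH cft by blast
    have tk: "kron (PP (f \<circ> Transposition.transpose a b) l) t = - kron (PP f l) t"
      by (rule transp_kron'[OF swap(1,2,3) t cf])
    show "kron (PP (f \<circ> (Transposition.transpose a b \<circ> p)) l) t = kron (PP f l) t \<or>
          kron (PP (f \<circ> (Transposition.transpose a b \<circ> p)) l) t = - kron (PP f l) t"
      unfolding eqf using h tk by (metis minus_minus)
  qed
qed

lemma PP_cong: "(\<And>k. k \<in> {1..n} \<Longrightarrow> f k = g k) \<Longrightarrow> PP f n = PP g n"
  unfolding PP_def by (intro ext prod.cong) auto

lemma cup1_PP: "cup1 l \<phi> = PP \<phi> l"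
  unfolding cup1_def PP_def by (intro ext prod.cong refl) (simp add: edge_sub)

lemma replace_all:
  assumes cA: "\<forall>k\<in>{1..l}. cocycle 1 X (A k)" and cB: "\<forall>k\<in>{1..l}. cocycle 1 X (B k)"
    and hom: "\<forall>k\<in>{1..l}. \<exists>\<beta>. \<forall>\<tau>. singular_simplex 1 X \<tau> \<longrightarrow> A k \<tau> - B k \<tau> = coboundary 1 \<beta> \<tau>"
    and t: "singular_relcycle l X {} t"
  shows "kron (PP A l) t = kron (PP B l) t"
proof -
  define C where "C n k = (if k \<le> n then B k else A k)" for n k
  have "kron (PP (C n) l) t = kron (PP A l) t" if "n \<le> l" for n
    using that
  proof (induction n)
    case 0
    have "PP (C 0) l = PP A l" by (rule PP_cong) (auto simp: C_def)
    then show ?case by simp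
  next
    case (Suc n)
    have i: "Suc n \<in> {1..l}" using Suc.prems by auto
    obtain \<beta> where \<beta>: "\<And>\<tau>. singular_simplex 1 X \<tau> \<Longrightarrow> A (Suc n) \<tau> - B (Suc n) \<tau> = coboundary 1 \<beta> \<tau>"
      using hom i by blast
    have "kron (PP (C n) l) t = kron (PP (C (Suc n)) l) t"
    proof (rule replace_one[OF i _ _ _ t])
      show "\<And>k. k \<in> {1..l} \<Longrightarrow> cocycle 1 X (C n k)" using cA cB by (auto simp: C_def)
      show "\<And>k. k \<noteq> Suc n \<Longrightarrow> C (Suc n) k = C n k" by (auto simp: C_def)
      show "\<And>\<tau>. singular_simplex 1 X \<tau> \<Longrightarrow> C n (Suc n) \<tau> - C (Suc n) (Suc n) \<tau> = coboundary 1 \<beta> \<tau>"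
        using \<beta> by (simp add: C_def)
    qed
    then show ?case using Suc by simp
  qed
  from this[of l] have "kron (PP (C l) l) t = kron (PP A l) t" by simp
  moreover have "PP (C l) l = PP B l" by (rule PP_cong) (auto simp: C_def)
  ultimately show ?thesis by simp
qed

lemma cob_pull:
  "coboundary (Suc n) (cochain_pullback n f \<phi>) \<tau> = coboundary (Suc n) \<phi> (simplex_map (Suc n) f \<tau>)"
  unfolding coboundary_def cochain_pullback_def face_sub
proof (intro sum.cong refl)
  fix k
  have "simplex_map n f (sub \<tau> n (fc k)) = sub (simplex_map (Suc n) f \<tau>) n (fc k)"
    by (rule simplex_map_sub) (auto simp: fc_def)
  then show "(-1) ^ k * \<phi> (simplex_map n f (sub \<tau> (Suc n - 1) (fc k))) =
         (-1) ^ k * \<phi> (sub (simplex_map (Suc n) f \<tau>) (Suc n - 1) (fc k))" by simp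
qed

lemma pull_cocycle:
  assumes "continuous_map X Y f" "cocycle 1 Y \<phi>"
  shows "cocycle 1 X (cochain_pullback 1 f \<phi>)"
  using assms unfolding cocycle_def
  by (auto simp: cob_pull singular_simplex_simplex_map)

lemma pull_cohom:
  assumes f: "continuous_map X Y f" and c: "cohomologous 1 Y \<phi> \<psi>"
  shows "\<exists>\<beta>. \<forall>\<tau>. singular_simplex 1 X \<tau> \<longrightarrow>
            cochain_pullback 1 f \<phi> \<tau> - cochain_pullback 1 f \<psi> \<tau> = coboundary 1 \<beta> \<tau>"
proof -
  obtain \<beta> where \<beta>: "\<And>\<sigma>. singular_simplex 1 Y \<sigma> \<Longrightarrow> \<phi> \<sigma> - \<psi> \<sigma> = coboundary 1 \<beta> \<sigma>"
    using c unfolding cohomologous_def by blast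
  show ?thesis
  proof (intro exI allI impI)
    fix \<tau> assume "singular_simplex 1 X \<tau>"
    then have "singular_simplex 1 Y (simplex_map 1 f \<tau>)" using f singular_simplex_simplex_map by blast
    then show "cochain_pullback 1 f \<phi> \<tau> - cochain_pullback 1 f \<psi> \<tau> = coboundary 1 (cochain_pullback 0 f \<beta>) \<tau>"
      using \<beta> cob_pull[of 0 f \<beta> \<tau>] by (simp add: cochain_pullback_def)
  qed
qed

lemma conf_sub:
  assumes "Y \<subseteq> R"
  shows "conf 2 (top_of_set Y) = subtopology (conf 2 (top_of_set R)) (PiE {1..2} (\<lambda>_. Y))"
proof -
  have "top_of_set Y = subtopology (top_of_set R) Y"
    using assms by (simp add: subtopology_subtopology Int_absorb1)
  then have "product_topology (\<lambda>i. top_of_set Y) {1..2::nat} = subtopology (product_topology (\<lambda>i. top_of_set R) {1..2}) (PiE {1..2} (\<lambda>_. Y))"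
    by (simp add: subtopology_product_topology)
  then show ?thesis unfolding conf_def by (simp add: subtopology_subtopology Int_commute)
qed

lemma Phi_gperm_Psi:
  assumes k: "k \<in> {1..l}" and sk: "\<sigma> k \<in> {1..l}" and e: "y (\<sigma> k) \<in> extensional {1..2}"
  shows "Phi k (gperm l \<sigma> (Psi l y)) = y (\<sigma> k)"
proof
  fix m
  show "Phi k (gperm l \<sigma> (Psi l y)) m = y (\<sigma> k) m"
  proof (cases "m = 1 \<or> m = 2")
    case True
    then show ?thesis
    proof
      assume m: "m = 1"
      have a: "2 * k - 2 + m = 2 * k - 1" and b: "(2 * k - 1 + 1) div 2 = k" and c: "odd (2 * k - 1)" and c': "2 * k - 1 \<in> {1..2*l}"
        using k m by auto
      have d: "(2 * \<sigma> k - 1 + 1) div 2 = \<sigma> k" "odd (2 * \<sigma> k - 1)" "2 * \<sigma> k - 1 \<in> {1..2*l}"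
        using sk by auto
      show ?thesis using k m a b c c' d by (simp add: Phi_def gperm_def Psi_def)
    next
      assume m: "m = 2"
      have a: "2 * k - 2 + m = 2 * k" and b: "(2 * k + 1) div 2 = k" and c: "\<not> odd (2 * k)" and c': "2 * k \<in> {1..2*l}"
        using k m by auto
      have d: "(2 * \<sigma> k + 1) div 2 = \<sigma> k" "2 * \<sigma> k \<in> {1..2*l}"
        using sk by auto
      show ?thesis using k m a b c c' d by (simp add: Phi_def gperm_def Psi_def)
    qed
  next
    case False
    then have "m \<notin> {1..2}" by auto
    then show ?thesis using e False by (auto simp: Phi_def extensional_def)
  qed
qed

theorem proposition5p5:
  fixes V :: "'v set" and E :: "'v set set" and pos :: "'v \<Rightarrow> 'e::euclidean_space"
    and m l :: nat and v :: "nat \<Rightarrow> 'v" and Y :: "nat \<Rightarrow> 'e set"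
    and \<alpha> g :: "nat \<Rightarrow> (nat \<Rightarrow> 'e) cochain"
    and t :: "(nat \<Rightarrow> nat \<Rightarrow> 'e) chain"
    and \<sigma> r :: "nat \<Rightarrow> nat"
  defines "T \<equiv> top_of_set (realisation E pos)"
  assumes tree: "geometric_tree V E pos"
    and ess: "bij_betw v {1..m} {w \<in> V. vdegree E w \<ge> 3}"
    and l: "1 \<le> l" "l \<le> m"
    and Ysub: "\<And>i. i \<in> {1..m} \<Longrightarrow> Y i \<subseteq> realisation E pos"
    and Yg: "\<And>i. i \<in> {1..m} \<Longrightarrow> Y_graph_at E pos (v i) (Y i)"
    and Ydisj: "\<And>i j. i \<in> {1..m} \<Longrightarrow> j \<in> {1..m} \<Longrightarrow> i \<noteq> j \<Longrightarrow> Y i \<inter> Y j = {}"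
    and ggen: "\<And>j. j \<in> {1..m} \<Longrightarrow> generator_H1 (conf 2 (top_of_set (Y j))) (g j)"
    and \<alpha>cocycle: "\<And>i. i \<in> {1..m} \<Longrightarrow> cocycle 1 (conf 2 T) (\<alpha> i)"
    and \<alpha>restr: "\<And>i j. i \<in> {1..m} \<Longrightarrow> j \<in> {1..m} \<Longrightarrow>
        cohomologous 1 (conf 2 (top_of_set (Y j))) (cochain_pullback 1 id (\<alpha> i))
          (if i = j then g j else (\<lambda>_. 0))"
    and tcycle: "singular_relcycle l
        (product_topology (\<lambda>j. conf 2 (top_of_set (Y j))) {1..l}) {} t"
    and tnorm: "kron (cup1 l (\<lambda>j. cochain_pullback 1 (\<lambda>y. y j) (g j))) t = 1"
    and \<sigma>perm: "\<sigma> permutes {1..l}"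
    and r: "\<And>j. j \<in> {1..l} \<Longrightarrow> r j \<in> {1..l}"
  shows "let val = kron (cup1 l (\<lambda>i. cochain_pullback 1 (Phi i) (\<alpha> (r i))))
                     (chain_map l (gperm l \<sigma>) (chain_map l (Psi l) t))
         in if (\<forall>j\<in>{1..l}. r j = \<sigma> j) then val = 1 \<or> val = -1 else val = 0"
proof -
  define Xp where "Xp = product_topology (\<lambda>j. conf 2 (top_of_set (Y j))) {1..l}"
  have lm: "\<And>j. j \<in> {1..l} \<Longrightarrow> j \<in> {1..m}" using l by auto
  have \<sigma>in: "\<And>j. j \<in> {1..l} \<Longrightarrow> \<sigma> j \<in> {1..l}"
    by (rule permutes_in_image[OF \<sigma>perm, THEN iffD2])
  have cont: "\<And>j. j \<in> {1..l} \<Longrightarrow> continuous_map Xp (conf 2 (top_of_set (Y j))) (\<lambda>y. y j)"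
    unfolding Xp_def by (rule continuous_map_product_projection)
  have tc: "singular_relcycle l Xp {} t" unfolding Xp_def by (rule tcycle)
  have keys: "\<And>s. s \<in> Poly_Mapping.keys t \<Longrightarrow> singular_simplex l Xp s"
    using tc unfolding singular_cycle singular_chain_def by blast
  define A where "A i = cochain_pullback 1 (\<lambda>y. y (\<sigma> i)) (\<alpha> (r i))" for i
  define G where "G j = cochain_pullback 1 (\<lambda>y. y j) (g j)" for j
  define B where "B i = (if r i = \<sigma> i then G (\<sigma> i) else (\<lambda>_. 0))" for i
  have valA: "kron (cup1 l (\<lambda>i. cochain_pullback 1 (Phi i) (\<alpha> (r i))))
                     (chain_map l (gperm l \<sigma>) (chain_map l (Psi l) t)) = kron (PP A l) t"
  proof -
    have "chain_map l (gperm l \<sigma>) (chain_map l (Psi l) t) = chain_map l (gperm l \<sigma> \<circ> Psi l) t"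
      by (simp add: chain_map_compose)
    then have "kron (cup1 l (\<lambda>i. cochain_pullback 1 (Phi i) (\<alpha> (r i))))
                     (chain_map l (gperm l \<sigma>) (chain_map l (Psi l) t))
        = kron (\<lambda>s. PP (\<lambda>i. cochain_pullback 1 (Phi i) (\<alpha> (r i))) l (simplex_map l (gperm l \<sigma> \<circ> Psi l) s)) t"
      by (simp add: kron_chain_map cup1_PP)
    also have "\<dots> = kron (PP A l) t"
    proof (rule kron_cong)
      fix s assume s: "s \<in> Poly_Mapping.keys t"
      then have ss: "singular_simplex l Xp s" by (rule keys)
      show "PP (\<lambda>i. cochain_pullback 1 (Phi i) (\<alpha> (r i))) l (simplex_map l (gperm l \<sigma> \<circ> Psi l) s) = PP A l s"
        unfolding PP_def
      proof (rule prod.cong[OF refl])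
        fix k assume k: "k \<in> {1..l}"
        have bnd: "\<And>j. j \<le> 1 \<Longrightarrow> ev k j \<le> l" using k by (auto simp: ev_def)
        have es: "singular_simplex 1 Xp (sub s 1 (ev k))" by (rule sub_singular[OF ss bnd])
        have "simplex_map 1 (Phi k) (sub (simplex_map l (gperm l \<sigma> \<circ> Psi l) s) 1 (ev k))
            = simplex_map 1 (Phi k) (simplex_map 1 (gperm l \<sigma> \<circ> Psi l) (sub s 1 (ev k)))"
          by (simp add: simplex_map_sub[OF bnd])
        also have "\<dots> = simplex_map 1 (Phi k \<circ> (gperm l \<sigma> \<circ> Psi l)) (sub s 1 (ev k))"
          by (simp add: simplex_map_compose)
        also have "\<dots> = simplex_map 1 (\<lambda>y. y (\<sigma> k)) (sub s 1 (ev k))"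
        proof (rule simplex_map_eq[OF es])
          fix y assume y: "y \<in> topspace Xp"
          have "y (\<sigma> k) \<in> topspace (conf 2 (top_of_set (Y (\<sigma> k))))"
            using y \<sigma>in[OF k] by (auto simp: Xp_def PiE_def Pi_def)
          then have "y (\<sigma> k) \<in> extensional {1..2}"
            by (auto simp: conf_def PiE_def)
          then show "(Phi k \<circ> (gperm l \<sigma> \<circ> Psi l)) y = y (\<sigma> k)"
            using Phi_gperm_Psi[of k l \<sigma> y, OF k \<sigma>in[OF k]] by simp
        qed
        finally show "cochain_pullback 1 (Phi k) (\<alpha> (r k)) (sub (simplex_map l (gperm l \<sigma> \<circ> Psi l) s) 1 (ev k))
            = A k (sub s 1 (ev k))"
          by (simp add: cochain_pullback_def A_def)
      qed
    qed
    finally show ?thesis .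
  qed
  have cyc_conf: "\<And>i j. i \<in> {1..m} \<Longrightarrow> j \<in> {1..m} \<Longrightarrow> cocycle 1 (conf 2 (top_of_set (Y j))) (\<alpha> i)"
  proof -
    fix i j assume i: "i \<in> {1..m}" and j: "j \<in> {1..m}"
    have eq: "conf 2 (top_of_set (Y j)) = subtopology (conf 2 T) (PiE {1..2} (\<lambda>_. Y j))"
      unfolding T_def by (rule conf_sub[OF Ysub[OF j]])
    show "cocycle 1 (conf 2 (top_of_set (Y j))) (\<alpha> i)"
      using \<alpha>cocycle[OF i] unfolding cocycle_def eq singular_simplex_subtopology by blast
  qed
  have cA: "\<forall>k\<in>{1..l}. cocycle 1 Xp (A k)"
  proof
    fix k assume k: "k \<in> {1..l}"
    show "cocycle 1 Xp (A k)" unfolding A_def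
      by (rule pull_cocycle[OF cont[OF \<sigma>in[OF k]] cyc_conf[OF lm[OF r[OF k]] lm[OF \<sigma>in[OF k]]]])
  qed
  have cG: "\<And>j. j \<in> {1..l} \<Longrightarrow> cocycle 1 Xp (G j)"
  proof -
    fix j assume j: "j \<in> {1..l}"
    have "cocycle 1 (conf 2 (top_of_set (Y j))) (g j)"
      using ggen[OF lm[OF j]] by (simp add: generator_H1_def)
    then show "cocycle 1 Xp (G j)" unfolding G_def by (rule pull_cocycle[OF cont[OF j]])
  qed
  have c0: "cocycle 1 Xp (\<lambda>_. 0)"
    by (simp add: cocycle_def coboundary_def)
  have cB: "\<forall>k\<in>{1..l}. cocycle 1 Xp (B k)"
    unfolding B_def using cG \<sigma>in c0 by auto
  have hom: "\<forall>k\<in>{1..l}. \<exists>\<beta>. \<forall>\<tau>. singular_simplex 1 Xp \<tau> \<longrightarrow> A k \<tau> - B k \<tau> = coboundary 1 \<beta> \<tau>"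
  proof
    fix k assume k: "k \<in> {1..l}"
    have ch: "cohomologous 1 (conf 2 (top_of_set (Y (\<sigma> k)))) (cochain_pullback 1 id (\<alpha> (r k)))
          (if r k = \<sigma> k then g (\<sigma> k) else (\<lambda>_. 0))"
      using \<alpha>restr[OF lm[OF r[OF k]] lm[OF \<sigma>in[OF k]]] .
    obtain \<beta> where \<beta>: "\<And>\<tau>. singular_simplex 1 Xp \<tau> \<Longrightarrow>
        cochain_pullback 1 (\<lambda>y. y (\<sigma> k)) (cochain_pullback 1 id (\<alpha> (r k))) \<tau>
      - cochain_pullback 1 (\<lambda>y. y (\<sigma> k)) (if r k = \<sigma> k then g (\<sigma> k) else (\<lambda>_. 0)) \<tau> = coboundary 1 \<beta> \<tau>"
      using pull_cohom[OF cont[OF \<sigma>in[OF k]] ch] by blast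
    have e1: "cochain_pullback 1 (\<lambda>y. y (\<sigma> k)) (cochain_pullback 1 id (\<alpha> (r k))) = A k"
    proof
      fix \<tau> :: "(nat \<Rightarrow> real) \<Rightarrow> nat \<Rightarrow> nat \<Rightarrow> 'e"
      have "simplex_map 1 id (simplex_map 1 (\<lambda>y. y (\<sigma> k)) \<tau>) = simplex_map 1 (id \<circ> (\<lambda>y. y (\<sigma> k))) \<tau>"
        unfolding simplex_map_def by (auto simp: fun_eq_iff)
      then show "cochain_pullback 1 (\<lambda>y. y (\<sigma> k)) (cochain_pullback 1 id (\<alpha> (r k))) \<tau> = A k \<tau>"
        by (simp add: cochain_pullback_def A_def del: simplex_map_id)
    qed
    have e2: "cochain_pullback 1 (\<lambda>y. y (\<sigma> k)) (if r k = \<sigma> k then g (\<sigma> k) else (\<lambda>_. 0)) = B k"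
      by (auto simp: B_def G_def cochain_pullback_def)
    show "\<exists>\<beta>. \<forall>\<tau>. singular_simplex 1 Xp \<tau> \<longrightarrow> A k \<tau> - B k \<tau> = coboundary 1 \<beta> \<tau>"
      using \<beta> unfolding e1 e2 by blast
  qed
  have AB: "kron (PP A l) t = kron (PP B l) t"
    by (rule replace_all[OF cA cB hom tc])
  show ?thesis
  proof (cases "\<forall>j\<in>{1..l}. r j = \<sigma> j")
    case True
    have "PP B l = PP (G \<circ> \<sigma>) l" by (rule PP_cong) (use True in \<open>auto simp: B_def\<close>)
    moreover have cGs: "\<forall>k\<in>{1..l}. cocycle 1 Xp (G k)" using cG by blast
    moreover have "kron (PP G l) t = 1"
      using tnorm by (simp add: cup1_PP G_def[abs_def])
    ultimately have "kron (PP B l) t = 1 \<or> kron (PP B l) t = -1"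
      using perm_kron[OF \<sigma>perm tc] by auto
    then show ?thesis using True valA AB by (simp add: Let_def)
  next
    case False
    then obtain j where j: "j \<in> {1..l}" "r j \<noteq> \<sigma> j" by blast
    have "PP B l = (\<lambda>_. 0)"
      unfolding PP_def using j by (intro ext prod_zero) (auto simp: B_def intro!: bexI[of _ j])
    then show ?thesis using False valA AB by (simp add: Let_def kron_def)
  qed
qed

end
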